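(* Let $A$ be an irreducible idempotent semiring and $M$ an irreducible $\mathbb{F}_1$-algebra. Then the semiring $A\otimes_{\mathbb{F}_1}M$ is irreducible. Moreover, if neither $A$ nor $M$ has nontrivial zero-divisors, then neither does $A\otimes_{\mathbb{F}_1}M$. In particular, for any (commutative) monoid $M$, the monoid semiring $A[M]$ is irreducible, and if $A$ has no nontrivial zero-divisors, neither does $A[M]$.
   Context: Semirings are commutative with $1\neq0$; idempotent means $a+a=a$. An $\mathbb{F}_1$-algebra is a commutative monoid $M$ with an absorbing element $0_M$. A semiring (resp. $\mathbb{F}_1$-algebra) is irreducible if whenever a product $xy$ is nilpotent, $x$ or $y$ is nilpotent. $A\otimes_{\mathbb{F}_1}M$ is the monoid semiring $A[M]$ with $0_M$ identified with $0_A$. *)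

theory Defs
  imports Main
begin

definition nilpotent_in :: "('b \<Rightarrow> 'b \<Rightarrow> 'b) \<Rightarrow> 'b \<Rightarrow> 'b \<Rightarrow> 'b \<Rightarrow> bool" where
  "nilpotent_in mul z e x \<longleftrightarrow> (\<exists>n. ((mul x) ^^ n) e = z)"

definition irreducible_str :: "'b set \<Rightarrow> ('b \<Rightarrow> 'b \<Rightarrow> 'b) \<Rightarrow> 'b \<Rightarrow> 'b \<Rightarrow> bool" where
  "irreducible_str C mul z e \<longleftrightarrow>
     (\<forall>x\<in>C. \<forall>y\<in>C. nilpotent_in mul z e (mul x y) \<longrightarrow>
        nilpotent_in mul z e x \<or> nilpotent_in mul z e y)"

definition no_zero_divisors_str :: "'b set \<Rightarrow> ('b \<Rightarrow> 'b \<Rightarrow> 'b) \<Rightarrow> 'b \<Rightarrow> bool" where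
  "no_zero_divisors_str C mul z \<longleftrightarrow> (\<forall>x\<in>C. \<forall>y\<in>C. mul x y = z \<longrightarrow> x = z \<or> y = z)"

definition idempotent_semiring :: "'a::comm_semiring_1 itself \<Rightarrow> bool" where
  "idempotent_semiring _ \<longleftrightarrow> (\<forall>a::'a. a + a = a)"

text \<open>F1-algebras: commutative monoids with an absorbing element, i.e. the sort
  {comm_monoid_mult, mult_zero}.  The tensor product A \<otimes>_F1 M is the monoid
  semiring A[M] with the basis element of 0_M identified with 0_A; concretely,
  finitely supported functions M \<Rightarrow> A vanishing at 0_M, with convolution
  product in which contributions landing at 0_M are discarded.\<close>

definition tensor_carrier :: "('m::{comm_monoid_mult,mult_zero} \<Rightarrow> 'a::comm_semiring_1) set" where
  "tensor_carrier = {f. finite {m. f m \<noteq> 0} \<and> f 0 = 0}"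

definition tensor_add :: "('m::{comm_monoid_mult,mult_zero} \<Rightarrow> 'a::comm_semiring_1) \<Rightarrow> ('m \<Rightarrow> 'a) \<Rightarrow> ('m \<Rightarrow> 'a)" where
  "tensor_add f g = (\<lambda>m. f m + g m)"

definition tensor_mult :: "('m::{comm_monoid_mult,mult_zero} \<Rightarrow> 'a::comm_semiring_1) \<Rightarrow> ('m \<Rightarrow> 'a) \<Rightarrow> ('m \<Rightarrow> 'a)" where
  "tensor_mult f g = (\<lambda>m. if m = 0 then 0 else
      (\<Sum>p\<in>{(x, y). f x \<noteq> 0 \<and> g y \<noteq> 0 \<and> x * y = m}. f (fst p) * g (snd p)))"

definition tensor_zero :: "'m::{comm_monoid_mult,mult_zero} \<Rightarrow> 'a::comm_semiring_1" where
  "tensor_zero = (\<lambda>m. 0)"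

definition tensor_one :: "'m::{comm_monoid_mult,mult_zero} \<Rightarrow> 'a::comm_semiring_1" where
  "tensor_one = (\<lambda>m. if m = 1 \<and> m \<noteq> 0 then 1 else 0)"

definition msr_carrier :: "('m::comm_monoid_mult \<Rightarrow> 'a::comm_semiring_1) set" where
  "msr_carrier = {f. finite {m. f m \<noteq> 0}}"

definition msr_add :: "('m::comm_monoid_mult \<Rightarrow> 'a::comm_semiring_1) \<Rightarrow> ('m \<Rightarrow> 'a) \<Rightarrow> ('m \<Rightarrow> 'a)" where
  "msr_add f g = (\<lambda>m. f m + g m)"

definition msr_mult :: "('m::comm_monoid_mult \<Rightarrow> 'a::comm_semiring_1) \<Rightarrow> ('m \<Rightarrow> 'a) \<Rightarrow> ('m \<Rightarrow> 'a)" where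
  "msr_mult f g = (\<lambda>m.
      (\<Sum>p\<in>{(x, y). f x \<noteq> 0 \<and> g y \<noteq> 0 \<and> x * y = m}. f (fst p) * g (snd p)))"

definition msr_zero :: "'m::comm_monoid_mult \<Rightarrow> 'a::comm_semiring_1" where
  "msr_zero = (\<lambda>m. 0)"

definition msr_one :: "'m::comm_monoid_mult \<Rightarrow> 'a::comm_semiring_1" where
  "msr_one = (\<lambda>m. if m = 1 then 1 else 0)"

end

theory Submission
  imports Defs
begin

definition le :: "'a::comm_semiring_1 \<Rightarrow> 'a \<Rightarrow> bool" where "le a b \<longleftrightarrow> a + b = b"

lemma le_refl: assumes idem: "\<And>a::'a::comm_semiring_1. a + a = a" shows "le (a::'a) a"
  using idem by (simp add: le_def)

lemma le_trans: assumes "le (a::'a::comm_semiring_1) b" "le b c" shows "le a c"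
  using assms unfolding le_def by (metis add.assoc)

lemma le_add_both: assumes "le (a::'a::comm_semiring_1) c" "le b c" shows "le (a+b) c"
  using assms unfolding le_def by (metis add.assoc)

lemma le_mult: assumes "le (a::'a::comm_semiring_1) b" shows "le (c*a) (c*b)"
  using assms unfolding le_def by (metis distrib_left)

lemma le_mult2: assumes "le (a::'a::comm_semiring_1) b" "le c d" shows "le (a*c) (b*d)"
proof -
  have "le (c*a) (c*b)" using assms(1) by (rule le_mult)
  moreover have "le (b*c) (b*d)" using assms(2) by (rule le_mult)
  ultimately show ?thesis by (metis le_trans mult.commute)
qed

lemma le_pow: assumes idem: "\<And>a::'a::comm_semiring_1. a + a = a" and "le (a::'a) b"
  shows "le (a^n) (b^n)"
proof (induction n)
  case 0 then show ?case using le_refl[OF idem] by simp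
next
  case (Suc n) then show ?case using le_mult2[OF assms(2) Suc] by simp
qed

lemma le_zero: "le (a::'a::comm_semiring_1) 0 \<Longrightarrow> a = 0" by (simp add: le_def)
lemma le_zero_any: "le (0::'a::comm_semiring_1) a" by (simp add: le_def)

lemma sum_le: assumes "finite I" "\<forall>i\<in>I. le (F i) (c::'a::comm_semiring_1)"
  shows "le (sum F I) c"
  using assms
proof (induction I rule: finite_induct)
  case empty then show ?case by (simp add: le_zero_any)
next
  case (insert x F) then show ?case by (simp add: le_add_both)
qed

lemma le_sum: assumes idem: "\<And>a::'a::comm_semiring_1. a + a = a" and "finite I" "i \<in> I"
  shows "le (F i :: 'a) (sum F I)"
proof -
  have "sum F I = F i + sum F (I - {i})" using assms(2,3) by (simp add: sum.remove)
  then show ?thesis unfolding le_def by (metis add.assoc idem)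
qed

lemma pow_funpow: "((*) (x::'a::monoid_mult) ^^ n) 1 = x ^ n"
  by (induction n) auto

definition gmult :: "('m::comm_monoid_mult \<Rightarrow> bool) \<Rightarrow> ('m \<Rightarrow> 'a::comm_semiring_1) \<Rightarrow> ('m \<Rightarrow> 'a) \<Rightarrow> ('m \<Rightarrow> 'a)" where
  "gmult P f g = (\<lambda>m. if P m then 0 else
      (\<Sum>p\<in>{(x, y). f x \<noteq> 0 \<and> g y \<noteq> 0 \<and> x * y = m}. f (fst p) * g (snd p)))"

definition gone :: "('m::comm_monoid_mult \<Rightarrow> bool) \<Rightarrow> 'm \<Rightarrow> 'a::comm_semiring_1" where
  "gone P = (\<lambda>m. if m = 1 \<and> \<not> P m then 1 else 0)"

definition gcar :: "('m::comm_monoid_mult \<Rightarrow> bool) \<Rightarrow> ('m \<Rightarrow> 'a::comm_semiring_1) set" where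
  "gcar P = {f. finite {m. f m \<noteq> 0} \<and> (\<forall>m. P m \<longrightarrow> f m = 0)}"

lemma idx_finite: assumes "finite {m. f m \<noteq> 0}" "finite {m. g m \<noteq> 0}"
  shows "finite {(x, y). f x \<noteq> (0::'a::comm_semiring_1) \<and> g y \<noteq> (0::'a) \<and> x * y = (m::'m::comm_monoid_mult)}"
  by (rule finite_subset[of _ "{m. f m \<noteq> 0} \<times> {m. g m \<noteq> 0}"]) (use assms in auto)

lemma L1: assumes idem: "\<And>a::'a::comm_semiring_1. a + a = a"
  and f: "finite {m. f m \<noteq> 0}" and g: "finite {m. g m \<noteq> 0}" and nP: "\<not> P (x*y)"
  shows "le (f x * g y :: 'a) (gmult P f g (x*y))"
proof (cases "f x = 0 \<or> g y = 0")
  case True then show ?thesis by (auto simp: le_zero_any)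
next
  case False
  then have "(x,y) \<in> {(x', y'). f x' \<noteq> 0 \<and> g y' \<noteq> 0 \<and> x' * y' = x*y}" by simp
  from le_sum[OF idem idx_finite[OF f g] this, of "\<lambda>p. f (fst p) * g (snd p)"]
  show ?thesis using nP by (simp add: gmult_def)
qed

lemma gmult_fin: assumes f: "finite {m. f m \<noteq> 0}" and g: "finite {m. g m \<noteq> 0}"
  shows "finite {m. gmult P f g m \<noteq> (0::'a::comm_semiring_1)}"
proof (rule finite_subset[of _ "(\<lambda>p. fst p * snd p) ` ({m. f m \<noteq> 0} \<times> {m. g m \<noteq> 0})"])
  show "{m. gmult P f g m \<noteq> 0} \<subseteq> (\<lambda>p. fst p * snd p) ` ({m. f m \<noteq> 0} \<times> {m. g m \<noteq> 0})"
  proof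
    fix m assume "m \<in> {m. gmult P f g m \<noteq> 0}"
    then have mm: "gmult P f g m \<noteq> 0" by simp
    have "{(x, y). f x \<noteq> 0 \<and> g y \<noteq> 0 \<and> x * y = m} \<noteq> {}"
    proof
      assume e: "{(x, y). f x \<noteq> 0 \<and> g y \<noteq> 0 \<and> x * y = m} = {}"
      have "gmult P f g m = 0" unfolding gmult_def by (simp only: e sum.empty if_cancel)
      with mm show False by simp
    qed
    then obtain x y where "f x \<noteq> 0" "g y \<noteq> 0" "x * y = m" by auto
    then show "m \<in> (\<lambda>p. fst p * snd p) ` ({m. f m \<noteq> 0} \<times> {m. g m \<noteq> 0})"
      by (force intro: image_eqI[of _ _ "(x,y)"])
  qed
qed (use f g in auto)

lemma h_fin: assumes f: "finite {m. f m \<noteq> 0}"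
  shows "finite {m. ((gmult P f ^^ n) (gone P)) m \<noteq> (0::'a::comm_semiring_1)}"
proof (induction n)
  case 0
  have "{m. gone P m \<noteq> (0::'a)} \<subseteq> {1}" by (auto simp: gone_def split: if_splits)
  then show ?case by (auto intro: finite_subset)
next
  case (Suc n) then show ?case using gmult_fin[OF f] by simp
qed

lemma L2: assumes idem: "\<And>a::'a::comm_semiring_1. a + a = a"
  and absP: "\<And>x y. P x \<Longrightarrow> P (x*y)" and f: "finite {m. f m \<noteq> 0}"
  shows "\<not> P (m^n) \<Longrightarrow> le ((f m :: 'a) ^ n) (((gmult P f) ^^ n) (gone P) (m^n))"
proof (induction n)
  case 0 then show ?case using le_refl[OF idem] by (simp add: gone_def)
next
  case (Suc n)
  have nP: "\<not> P (m * m^n)" using Suc.prems by simp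
  have "\<not> P (m^n)" using nP absP[of "m^n" m] by (auto simp: mult.commute)
  then have IH: "le (f m ^ n) (((gmult P f) ^^ n) (gone P) (m^n))" by (rule Suc.IH)
  have "le (f m * ((gmult P f) ^^ n) (gone P) (m^n)) (gmult P f (((gmult P f) ^^ n) (gone P)) (m*m^n))"
    by (rule L1[where P=P and f=f and x=m and y="m^n", OF idem f h_fin[OF f] nP])
  moreover have "le (f m * f m ^ n) (f m * ((gmult P f) ^^ n) (gone P) (m^n))"
    using IH by (rule le_mult)
  ultimately show ?case by (simp add: le_trans[of "f m * f m ^ n"])
qed

lemma N1: assumes idem: "\<And>a::'a::comm_semiring_1. a + a = a"
  and absP: "\<And>x y. P x \<Longrightarrow> P (x*y)" and f: "finite {m. f m \<noteq> 0}"
  and h: "((gmult P f) ^^ n) (gone P) = (\<lambda>_. (0::'a))"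
  shows "P (m^n) \<or> f m ^ n = 0"
  using L2[where P=P and f=f and m=m and n=n, OF idem absP f] h le_zero by auto

fun PowP :: "nat \<Rightarrow> ('a::comm_semiring_1 \<times> 'm::comm_monoid_mult) set \<Rightarrow> ('a \<times> 'm) set" where
  "PowP 0 T = {(1,1)}"
| "PowP (Suc n) T = (\<lambda>(t,p). (fst t * fst p, snd t * snd p)) ` (T \<times> PowP n T)"

lemma PowP_fin: "finite T \<Longrightarrow> finite (PowP n T)"
  by (induction n) auto

lemma L3: assumes idem: "\<And>a::'a::comm_semiring_1. a + a = a"
  and absP: "\<And>x y. P x \<Longrightarrow> P (x*y)" and f: "finite {m. f m \<noteq> 0}"
  shows "\<not> P k \<Longrightarrow> le (((gmult P f) ^^ n) (gone P) k)
     (sum fst {p \<in> PowP n ((\<lambda>m. (f m :: 'a, m)) ` {m. f m \<noteq> 0}). snd p = k})"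
proof (induction n arbitrary: k)
  case 0
  show ?case
  proof (cases "k = 1")
    case True
    have "{p \<in> PowP 0 ((\<lambda>m. (f m :: 'a, m)) ` {m. f m \<noteq> 0}). snd p = k} = {(1,1)}"
      using True by auto
    then show ?thesis using 0 True le_refl[OF idem] by (simp add: gone_def)
  qed (simp add: gone_def le_zero_any)
next
  case (Suc n)
  define T where "T = (\<lambda>m. (f m :: 'a, m)) ` {m. f m \<noteq> 0}"
  have Tfin: "finite T" using f by (simp add: T_def)
  define h where "h = ((gmult P f) ^^ n) (gone P)"
  have hfin: "finite {m. h m \<noteq> 0}" unfolding h_def by (rule h_fin[OF f])
  define S where "S = sum fst {p \<in> PowP (Suc n) T. snd p = k}"
  have Sfin: "finite {p \<in> PowP (Suc n) T. snd p = k}"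
    by (rule finite_subset[where B="PowP (Suc n) T"]) (auto simp del: PowP.simps intro: PowP_fin[OF Tfin])
  have "le (gmult P f h k) S"
    unfolding gmult_def using Suc.prems
  proof (simp, intro sum_le[OF idx_finite[OF f hfin]] ballI)
    fix p assume p: "p \<in> {(x, y). f x \<noteq> 0 \<and> h y \<noteq> 0 \<and> x * y = k}"
    obtain x y where xy: "p = (x,y)" "f x \<noteq> 0" "h y \<noteq> 0" "x * y = k" using p by auto
    have "\<not> P y" using absP[of y x] Suc.prems xy(4) by (auto simp: mult.commute)
    then have IH: "le (h y) (sum fst {p \<in> PowP n T. snd p = y})"
      using Suc.IH unfolding h_def T_def by blast
    have "le (f x * h y) (f x * sum fst {p \<in> PowP n T. snd p = y})" using IH by (rule le_mult)
    moreover have "le (f x * sum fst {p \<in> PowP n T. snd p = y}) S"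
      unfolding sum_distrib_left
    proof (intro sum_le ballI)
      show "finite {p \<in> PowP n T. snd p = y}" using PowP_fin[OF Tfin] by simp
      fix q assume q: "q \<in> {p \<in> PowP n T. snd p = y}"
      have "(f x, x) \<in> T" using xy by (simp add: T_def)
      then have "(f x * fst q, x * snd q) \<in> PowP (Suc n) T" using q
        by (auto intro!: image_eqI[of _ _ "((f x, x), q)"])
      then have "(f x * fst q, x * snd q) \<in> {p \<in> PowP (Suc n) T. snd p = k}" using q xy by auto
      from le_sum[OF idem Sfin this, of fst] show "le (f x * fst q) S" by (simp add: S_def)
    qed
    ultimately have "le (f x * h y) S" by (rule le_trans)
    then show "le (f (fst p) * h (snd p)) S" using xy by simp
  qed
  then show ?case by (simp add: h_def S_def T_def)
qed

lemma decomp: "p \<in> PowP n (insert t T) \<Longrightarrow>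
  \<exists>e\<le>n. \<exists>q\<in>PowP (n-e) T. fst p = fst t ^ e * fst q \<and> snd p = snd t ^ e * snd q"
proof (induction n arbitrary: p)
  case 0 then show ?case by auto
next
  case (Suc n)
  then obtain s r where sr: "s \<in> insert t T" "r \<in> PowP n (insert t T)"
    "p = (fst s * fst r, snd s * snd r)" by auto
  from Suc.IH[OF sr(2)] obtain e q where eq: "e \<le> n" "q \<in> PowP (n-e) T"
    "fst r = fst t ^ e * fst q" "snd r = snd t ^ e * snd q" by blast
  show ?case
  proof (cases "s = t")
    case True
    then show ?thesis using eq sr
      by (intro exI[of _ "Suc e"]) (auto simp: mult.assoc)
  next
    case False
    then have "s \<in> T" using sr by auto
    then have "(fst s * fst q, snd s * snd q) \<in> PowP (Suc (n - e)) T" using eq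
      by (auto intro!: image_eqI[of _ _ "(s, q)"])
    moreover have "Suc (n - e) = Suc n - e" using eq by simp
    ultimately have "(fst s * fst q, snd s * snd q) \<in> PowP (Suc n - e) T" by simp
    then show ?thesis using eq sr
      by (intro exI[of _ e] conjI bexI[of _ "(fst s * fst q, snd s * snd q)"]) (auto simp: mult.left_commute)
  qed
qed

lemma pigeon: assumes absP: "\<And>x y. P x \<Longrightarrow> P (x*y)"
  shows "finite T \<Longrightarrow> (\<forall>t\<in>T. fst t ^ Q = (0::'a::comm_semiring_1) \<or> P (snd t ^ Q :: 'm::comm_monoid_mult))
   \<Longrightarrow> n > card T * Q \<Longrightarrow> p \<in> PowP n T \<Longrightarrow> fst p = 0 \<or> P (snd p)"
proof (induction T arbitrary: n p rule: finite_induct)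
  case empty
  then obtain n' where "n = Suc n'" by (cases n) auto
  then show ?case using empty by simp
next
  case (insert t T)
  from decomp[OF insert.prems(3)] obtain e q where eq: "e \<le> n" "q \<in> PowP (n-e) T"
    "fst p = fst t ^ e * fst q" "snd p = snd t ^ e * snd q" by blast
  show ?case
  proof (cases "Q \<le> e")
    case True
    then have pe: "fst t ^ e = fst t ^ Q * fst t ^ (e - Q)" "snd t ^ e = snd t ^ Q * snd t ^ (e - Q)"
      by (simp_all flip: power_add)
    have "fst t ^ Q = 0 \<or> P (snd t ^ Q)" using insert.prems(1) by auto
    then show ?thesis
    proof
      assume "fst t ^ Q = 0" then show ?thesis using eq pe by simp
    next
      assume "P (snd t ^ Q)"
      then have "P (snd t ^ e)" using pe absP by simp
      then show ?thesis using eq absP by simp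
    qed
  next
    case False
    have "n - e > card T * Q" using insert.prems(2) insert.hyps False by simp
    then have "fst q = 0 \<or> P (snd q)" using insert.IH[OF _ _ eq(2)] insert.prems(1) by blast
    then show ?thesis using eq absP[of "snd q" "snd t ^ e"] by (auto simp: mult.commute)
  qed
qed

lemma unif: "finite S \<Longrightarrow> \<forall>x\<in>S. \<exists>q. R x q \<Longrightarrow> (\<And>x q q'. R x q \<Longrightarrow> q \<le> q' \<Longrightarrow> R x q')
  \<Longrightarrow> \<exists>Q::nat. \<forall>x\<in>S. R x Q"
proof (induction S rule: finite_induct)
  case empty then show ?case by simp
next
  case (insert x F)
  then obtain Q where Q: "\<forall>y\<in>F. R y Q" by auto
  obtain q where q: "R x q" using insert.prems by auto
  have "\<forall>y\<in>insert x F. R y (max Q q)" using Q q insert.prems(2) by (auto intro: max.cobounded1 max.cobounded2)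
  then show ?case by blast
qed

lemma N2: assumes idem: "\<And>a::'a::comm_semiring_1. a + a = a"
  and absP: "\<And>x y. P x \<Longrightarrow> P (x*y)" and f: "finite {m. f m \<noteq> 0}"
  and hyp: "\<forall>m. f m \<noteq> 0 \<longrightarrow> (\<exists>q. (f m :: 'a) ^ q = 0) \<or> (\<exists>q. P (m^q))"
  shows "\<exists>n. ((gmult P f) ^^ n) (gone P) = (\<lambda>_. 0::'a)"
proof -
  define R where "R = (\<lambda>m q. (f m :: 'a) ^ q = 0 \<or> P (m^q))"
  have up: "R x q'" if "R x q" "q \<le> q'" for x q q'
  proof -
    have e: "f x ^ q' = f x ^ q * f x ^ (q' - q)" "x ^ q' = x ^ q * x ^ (q' - q)"
      using that(2) by (simp_all flip: power_add)
    show ?thesis using that(1) absP unfolding R_def e by auto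
  qed
  have "\<forall>x\<in>{m. f m \<noteq> 0}. \<exists>q. R x q" using hyp unfolding R_def by auto
  then have "\<exists>Q. \<forall>x\<in>{m. f m \<noteq> 0}. R x Q"
    by (rule unif[OF f]) (rule up)
  then obtain Q where Q: "\<forall>x\<in>{m. f m \<noteq> 0}. R x Q" by blast
  define T where "T = (\<lambda>m. (f m :: 'a, m)) ` {m. f m \<noteq> 0}"
  have Tfin: "finite T" using f by (simp add: T_def)
  have TQ: "\<forall>t\<in>T. fst t ^ Q = 0 \<or> P (snd t ^ Q)" using Q unfolding T_def R_def by auto
  define n where "n = Suc (card T * Q)"
  have "((gmult P f) ^^ n) (gone P) k = 0" for k
  proof (cases "P k")
    case True then show ?thesis by (simp add: n_def gmult_def)
  next
    case False
    have "\<forall>p \<in> {p \<in> PowP n T. snd p = k}. fst p = 0"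
    proof
      fix p assume p: "p \<in> {p \<in> PowP n T. snd p = k}"
      have "card T * Q < n" by (simp add: n_def)
      from pigeon[OF absP Tfin TQ this, of p] p False show "fst p = 0" by auto
    qed
    then have "sum fst {p \<in> PowP n T. snd p = k} = 0" by (intro sum.neutral) blast
    with L3[OF idem absP f False, of n] show ?thesis by (simp add: T_def le_zero)
  qed
  then show ?thesis by blast
qed

lemma gen_irred: assumes idem: "\<And>a::'a::comm_semiring_1. a + a = a"
  and absP: "\<And>x y. P x \<Longrightarrow> P (x*y)"
  and irrA: "\<And>x y::'a. (\<exists>n. (x*y)^n = 0) \<Longrightarrow> (\<exists>n. x^n = 0) \<or> (\<exists>n. y^n = 0)"
  and irrM: "\<And>x y. (\<forall>n. \<not> P (x^n)) \<Longrightarrow> (\<forall>n. \<not> P (y^n)) \<Longrightarrow> (\<forall>n. \<not> P ((x*y)^n))"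
  shows "irreducible_str (gcar P :: ('m::comm_monoid_mult \<Rightarrow> 'a) set) (gmult P) (\<lambda>_. 0) (gone P)"
  unfolding irreducible_str_def nilpotent_in_def
proof (intro ballI impI)
  fix f g :: "'m \<Rightarrow> 'a" assume fC: "f \<in> gcar P" and gC: "g \<in> gcar P"
  assume fg: "\<exists>n. (gmult P (gmult P f g) ^^ n) (gone P) = (\<lambda>_. 0)"
  have ff: "finite {m. f m \<noteq> 0}" and gf: "finite {m. g m \<noteq> 0}" using fC gC by (auto simp: gcar_def)
  show "(\<exists>n. (gmult P f ^^ n) (gone P) = (\<lambda>_. 0)) \<or> (\<exists>n. (gmult P g ^^ n) (gone P) = (\<lambda>_. 0))"
  proof (rule ccontr)
    assume nn: "\<not> ?thesis"
    obtain m where m: "\<forall>q. f m ^ q \<noteq> 0" "\<forall>q. \<not> P (m^q)"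
      using N2[where P=P and f=f, OF idem absP ff] nn by blast
    obtain m' where m': "\<forall>q. g m' ^ q \<noteq> 0" "\<forall>q. \<not> P (m'^q)"
      using N2[where P=P and f=g, OF idem absP gf] nn by blast
    have nP: "\<forall>n. \<not> P ((m*m')^n)" using irrM m(2) m'(2) by blast
    obtain n where n: "(gmult P (gmult P f g) ^^ n) (gone P) = (\<lambda>_. 0)" using fg by blast
    have "P ((m*m')^n) \<or> gmult P f g (m*m') ^ n = 0"
      by (rule N1[OF idem absP gmult_fin[OF ff gf] n])
    then have z: "gmult P f g (m*m') ^ n = 0" using nP by blast
    have "\<not> P (m*m')" using nP[rule_format, of 1] by simp
    then have "le (f m * g m') (gmult P f g (m*m'))" by (rule L1[OF idem ff gf])
    then have "le ((f m * g m') ^ n) (gmult P f g (m*m') ^ n)" by (rule le_pow[OF idem])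
    then have "(f m * g m') ^ n = 0" using z le_zero by simp
    then have "(\<exists>n. f m ^ n = 0) \<or> (\<exists>n. g m' ^ n = 0)" using irrA by blast
    then show False using m m' by blast
  qed
qed

lemma gen_nzd: assumes idem: "\<And>a::'a::comm_semiring_1. a + a = a"
  and nzA: "\<And>x y::'a. x * y = 0 \<Longrightarrow> x = 0 \<or> y = 0"
  and nzM: "\<And>x y. \<not> P x \<Longrightarrow> \<not> P y \<Longrightarrow> \<not> P (x*y)"
  shows "no_zero_divisors_str (gcar P :: ('m::comm_monoid_mult \<Rightarrow> 'a) set) (gmult P) (\<lambda>_. 0)"
  unfolding no_zero_divisors_str_def
proof (intro ballI impI)
  fix f g :: "'m \<Rightarrow> 'a" assume fC: "f \<in> gcar P" and gC: "g \<in> gcar P"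
  assume fg: "gmult P f g = (\<lambda>_. 0)"
  have ff: "finite {m. f m \<noteq> 0}" and gf: "finite {m. g m \<noteq> 0}" using fC gC by (auto simp: gcar_def)
  show "f = (\<lambda>_. 0) \<or> g = (\<lambda>_. 0)"
  proof (rule ccontr)
    assume "\<not> ?thesis"
    then have "\<exists>m. f m \<noteq> 0" "\<exists>m. g m \<noteq> 0" by (auto simp: fun_eq_iff)
    then obtain m m' where m: "f m \<noteq> 0" "g m' \<noteq> 0" by blast
    then have "\<not> P m" "\<not> P m'" using fC gC by (auto simp: gcar_def)
    then have "\<not> P (m*m')" by (rule nzM)
    then have "le (f m * g m') (gmult P f g (m*m'))" by (rule L1[OF idem ff gf])
    then have "f m * g m' = 0" using fg le_zero by simp
    then show False using m nzA by blast
  qed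
qed

theorem proposition5p6:
  assumes idemA: "idempotent_semiring TYPE('a::comm_semiring_1)"
    and irrA: "irreducible_str (UNIV :: 'a set) (*) 0 1"
  shows
    "(irreducible_str (UNIV :: 'm::{comm_monoid_mult,mult_zero} set) (*) 0 1 \<longrightarrow>
        irreducible_str (tensor_carrier :: ('m \<Rightarrow> 'a) set) tensor_mult tensor_zero tensor_one)
   \<and> (irreducible_str (UNIV :: 'm set) (*) 0 1 \<and>
      no_zero_divisors_str (UNIV :: 'a set) (*) 0 \<and>
      no_zero_divisors_str (UNIV :: 'm set) (*) 0 \<longrightarrow>
        no_zero_divisors_str (tensor_carrier :: ('m \<Rightarrow> 'a) set) tensor_mult tensor_zero)
   \<and> irreducible_str (msr_carrier :: ('n::comm_monoid_mult \<Rightarrow> 'a) set) msr_mult msr_zero msr_one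
   \<and> (no_zero_divisors_str (UNIV :: 'a set) (*) 0 \<longrightarrow>
        no_zero_divisors_str (msr_carrier :: ('n \<Rightarrow> 'a) set) msr_mult msr_zero)"
proof -
  have idem: "\<And>a::'a. a + a = a" using idemA by (simp add: idempotent_semiring_def)
  have irrA': "\<And>x y::'a. (\<exists>n. (x*y)^n = 0) \<Longrightarrow> (\<exists>n. x^n = 0) \<or> (\<exists>n. y^n = 0)"
    using irrA by (simp add: irreducible_str_def nilpotent_in_def pow_funpow)
  have tm: "tensor_mult = (gmult (\<lambda>m::'m. m = 0) :: ('m \<Rightarrow> 'a) \<Rightarrow> _ \<Rightarrow> _)"
    by (intro ext) (simp add: tensor_mult_def gmult_def)
  have to: "tensor_one = (gone (\<lambda>m::'m. m = 0) :: 'm \<Rightarrow> 'a)"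
    by (simp add: tensor_one_def gone_def fun_eq_iff)
  have tc: "tensor_carrier = (gcar (\<lambda>m::'m. m = 0) :: ('m \<Rightarrow> 'a) set)"
    by (auto simp: tensor_carrier_def gcar_def)
  have tz: "tensor_zero = (\<lambda>m::'m. 0::'a)" by (simp add: tensor_zero_def)
  have mm: "msr_mult = (gmult (\<lambda>m::'n. False) :: ('n \<Rightarrow> 'a) \<Rightarrow> _ \<Rightarrow> _)"
    by (intro ext) (simp add: msr_mult_def gmult_def)
  have mo: "msr_one = (gone (\<lambda>m::'n. False) :: 'n \<Rightarrow> 'a)"
    by (simp add: msr_one_def gone_def fun_eq_iff)
  have mc: "msr_carrier = (gcar (\<lambda>m::'n. False) :: ('n \<Rightarrow> 'a) set)"
    by (auto simp: msr_carrier_def gcar_def)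
  have mz: "msr_zero = (\<lambda>m::'n. 0::'a)" by (simp add: msr_zero_def)
  have absT: "\<And>x y::'m. x = 0 \<Longrightarrow> x * y = 0" by simp
  have P1: "irreducible_str (tensor_carrier :: ('m \<Rightarrow> 'a) set) tensor_mult tensor_zero tensor_one"
    if irrM: "irreducible_str (UNIV :: 'm set) (*) 0 1"
  proof -
    have irrM': "\<And>x y::'m. (\<exists>n. (x*y)^n = 0) \<Longrightarrow> (\<exists>n. x^n = 0) \<or> (\<exists>n. y^n = 0)"
      using irrM by (simp add: irreducible_str_def nilpotent_in_def pow_funpow)
    have "\<And>x y::'m. (\<forall>n. \<not> x^n = 0) \<Longrightarrow> (\<forall>n. \<not> y^n = 0) \<Longrightarrow> (\<forall>n. \<not> (x*y)^n = 0)"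
      using irrM' by blast
    from gen_irred[where P="\<lambda>m::'m. m = 0", OF idem absT irrA' this]
    show ?thesis unfolding tm to tc tz .
  qed
  have P2: "no_zero_divisors_str (tensor_carrier :: ('m \<Rightarrow> 'a) set) tensor_mult tensor_zero"
    if nzA: "no_zero_divisors_str (UNIV :: 'a set) (*) 0"
    and nzM: "no_zero_divisors_str (UNIV :: 'm set) (*) 0"
  proof -
    have a: "\<And>x y::'a. x * y = 0 \<Longrightarrow> x = 0 \<or> y = 0" using nzA by (simp add: no_zero_divisors_str_def)
    have b: "\<And>x y::'m. \<not> x = 0 \<Longrightarrow> \<not> y = 0 \<Longrightarrow> \<not> x * y = 0" using nzM by (auto simp: no_zero_divisors_str_def)
    from gen_nzd[where P="\<lambda>m::'m. m = 0", OF idem a b]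
    show ?thesis unfolding tm tc tz .
  qed
  have P3: "irreducible_str (msr_carrier :: ('n \<Rightarrow> 'a) set) msr_mult msr_zero msr_one"
    using gen_irred[where P="\<lambda>m::'n. False", OF idem _ irrA'] unfolding mm mo mc mz by simp
  have P4: "no_zero_divisors_str (msr_carrier :: ('n \<Rightarrow> 'a) set) msr_mult msr_zero"
    if nzA: "no_zero_divisors_str (UNIV :: 'a set) (*) 0"
  proof -
    have a: "\<And>x y::'a. x * y = 0 \<Longrightarrow> x = 0 \<or> y = 0" using nzA by (simp add: no_zero_divisors_str_def)
    from gen_nzd[where P="\<lambda>m::'n. False", OF idem a]
    show ?thesis unfolding mm mc mz by simp
  qed
  show ?thesis using P1 P2 P3 P4 by blast
qed

end
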